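(* Let $M$ be an $\widehat{\mathrm{FI}}$-module with generation degree $\le a$. Then $\Sigma^{a+2}M$ is an $\mathrm{FI}$-module.
   Context: $\widehat{\mathrm S}_n=\{(\sigma,d)\in\mathrm S_n\times\mathbb Z: d\text{ odd}\iff\operatorname{sgn}\sigma=-1\}$ ($n\ge2$; trivial for $n=0,1$). $\widehat{\mathrm{FI}}$: objects $n\in\mathbb N$, $\widehat{\mathrm{FI}}(n,m)=\widehat{\mathrm S}_m/i_2(\widehat{\mathrm S}_{m-n})$ ($i_1,i_2$ inclusions on first/last letters), composition $([s],[t])\mapsto[t\,i_1(s)]$; it carries a monoidal structure with $n\oplus m=n+m$, defined on morphisms via $i_1,i_2$ and a braiding coming from $\mathrm{Br}_n\to\widehat{\mathrm S}_n$, $\sigma_{i,i+1}\mapsto((i\ i{+}1),1)$; on automorphisms, $-\oplus 1$ is $i_1:\widehat{\mathrm S}_n\to\widehat{\mathrm S}_{n+1}$. $\Sigma M$ is the restriction of $M$ along $-\oplus1$, so $(\Sigma M)_n=M_{n+1}$. Generation degree $\le a$: $M$ is a quotient of $\mathbf I(W)$, $\mathbf I(W)_m=\bigoplus_{n\le m}\mathbb Z[\widehat{\mathrm{FI}}(n,m)]\otimes_{\mathbb Z\widehat{\mathrm S}_n}W_n$, with $W_n=0$ for $n>a$. An $\widehat{\mathrm{FI}}$-module is an $\mathrm{FI}$-module if it factors through $\widehat{\mathrm{FI}}\to\mathrm{FI}$ (induced by $\widehat{\mathrm S}_m\to\mathrm S_m$). *)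

theory Defs
  imports "HOL-Combinatorics.Permutations"
begin

text \<open>Elements of the groups S^_n are encoded as pairs (sigma, d), where sigma is a
  permutation of {0..<n} (identity outside) and d is an integer.\<close>

type_synonym shat = "(nat \<Rightarrow> nat) \<times> int"

definition Shat :: "nat \<Rightarrow> shat set" where
  "Shat n = (if n \<le> 1 then {(id, 0)}
             else {(\<sigma>, d). \<sigma> permutes {..<n} \<and> (odd d \<longleftrightarrow> sign \<sigma> = -1)})"

definition hmult :: "shat \<Rightarrow> shat \<Rightarrow> shat" where
  "hmult s t = (fst s \<circ> fst t, snd s + snd t)"

text \<open>i_1 : S^_n -> S^_m (first letters) is the identity on this encoding.
  i_2 : S^_k -> S^_m (last letters, k <= m):\<close>

definition i2 :: "nat \<Rightarrow> nat \<Rightarrow> shat \<Rightarrow> shat" where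
  "i2 m k s = ((\<lambda>i. if i < m - k then i else fst s (i - (m - k)) + (m - k)), snd s)"

text \<open>The left coset s * i_2(S^_{m-n}) in S^_m, i.e. the morphism [s] : n -> m.\<close>

definition hcoset :: "nat \<Rightarrow> nat \<Rightarrow> shat \<Rightarrow> shat set" where
  "hcoset m n s = {hmult s (i2 m (m - n) h) | h. h \<in> Shat (m - n)}"

definition FIhat :: "nat \<Rightarrow> nat \<Rightarrow> shat set set" where
  "FIhat n m = (if n \<le> m then {hcoset m n s | s. s \<in> Shat m} else {})"

text \<open>An FI^-module: abelian groups V n (subgroups of an ambient abelian group type)
  and additive maps F n m f : V n -> V m for f in FI^(n,m), functorial, where the composite
  of [s] : n -> m and [t] : m -> l is [t i_1(s)].\<close>

definition FIhat_module ::
  "(nat \<Rightarrow> 'v::ab_group_add set) \<Rightarrow> (nat \<Rightarrow> nat \<Rightarrow> shat set \<Rightarrow> 'v \<Rightarrow> 'v) \<Rightarrow> bool" where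
  "FIhat_module V F \<longleftrightarrow>
     (\<forall>n. 0 \<in> V n \<and> (\<forall>x\<in>V n. \<forall>y\<in>V n. x + y \<in> V n) \<and> (\<forall>x\<in>V n. - x \<in> V n)) \<and>
     (\<forall>n m f. f \<in> FIhat n m \<longrightarrow>
        (\<forall>x\<in>V n. F n m f x \<in> V m) \<and>
        (\<forall>x\<in>V n. \<forall>y\<in>V n. F n m f (x + y) = F n m f x + F n m f y)) \<and>
     (\<forall>n. \<forall>x\<in>V n. F n n (hcoset n n (id, 0)) x = x) \<and>
     (\<forall>n m l f g s t. f \<in> FIhat n m \<longrightarrow> g \<in> FIhat m l \<longrightarrow> s \<in> f \<longrightarrow> t \<in> g \<longrightarrow>
        (\<forall>x\<in>V n. F n l (hcoset l n (hmult t s)) x = F m l g (F n m f x)))"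

definition zspan :: "'v::ab_group_add set \<Rightarrow> 'v set" where
  "zspan S = \<Inter>{H. S \<subseteq> H \<and> 0 \<in> H \<and> (\<forall>x\<in>H. \<forall>y\<in>H. x + y \<in> H) \<and> (\<forall>x\<in>H. - x \<in> H)}"

text \<open>Generation degree <= a: every V m is generated by images of elements of degree <= a
  (equivalently, M is a quotient of some I(W) with W_n = 0 for n > a).\<close>

definition gen_degree_le ::
  "(nat \<Rightarrow> 'v::ab_group_add set) \<Rightarrow> (nat \<Rightarrow> nat \<Rightarrow> shat set \<Rightarrow> 'v \<Rightarrow> 'v) \<Rightarrow> nat \<Rightarrow> bool" where
  "gen_degree_le V F a \<longleftrightarrow>
     (\<forall>m. V m \<subseteq> zspan {F n m f x | n f x. n \<le> a \<and> f \<in> FIhat n m \<and> x \<in> V n})"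

text \<open>The functor - \<oplus> 1 on morphisms: for [s] : n -> m, [s] \<oplus> id_1 = [i_1(s) (id_n \<oplus> b)]
  where b in S^_{m-n+1} is the image of the braid passing the last strand over the m-n
  strands (permutation cyc n m, degree m - n).\<close>

definition cyc :: "nat \<Rightarrow> nat \<Rightarrow> nat \<Rightarrow> nat" where
  "cyc n m i = (if i = n then m else if n < i \<and> i \<le> m then i - 1 else i)"

definition oplus1 :: "nat \<Rightarrow> nat \<Rightarrow> shat set \<Rightarrow> shat set" where
  "oplus1 n m f = (let s = (SOME s. s \<in> f) in
     hcoset (Suc m) (Suc n) (fst s \<circ> cyc n m, snd s + int (m - n)))"

fun oplusk :: "nat \<Rightarrow> nat \<Rightarrow> nat \<Rightarrow> shat set \<Rightarrow> shat set" where
  "oplusk 0 n m f = f"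
| "oplusk (Suc k) n m f = oplus1 (n + k) (m + k) (oplusk k n m f)"

definition SigmaV :: "nat \<Rightarrow> (nat \<Rightarrow> 'v set) \<Rightarrow> nat \<Rightarrow> 'v set" where
  "SigmaV k V = (\<lambda>n. V (n + k))"

definition SigmaF :: "nat \<Rightarrow> (nat \<Rightarrow> nat \<Rightarrow> shat set \<Rightarrow> 'v \<Rightarrow> 'v) \<Rightarrow> nat \<Rightarrow> nat \<Rightarrow> shat set \<Rightarrow> 'v \<Rightarrow> 'v" where
  "SigmaF k F = (\<lambda>n m f. F (n + k) (m + k) (oplusk k n m f))"

text \<open>An FI^-module is an FI-module if it factors through FI^ -> FI, which sends the coset
  [s] in S^_m / i_2(S^_{m-n}) to its image (fst ` [s]) in S_m / S_{m-n}.\<close>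

definition is_FI_module ::
  "(nat \<Rightarrow> 'v::ab_group_add set) \<Rightarrow> (nat \<Rightarrow> nat \<Rightarrow> shat set \<Rightarrow> 'v \<Rightarrow> 'v) \<Rightarrow> bool" where
  "is_FI_module V F \<longleftrightarrow> FIhat_module V F \<and>
     (\<exists>N. \<forall>n m f. f \<in> FIhat n m \<longrightarrow> (\<forall>x\<in>V n. F n m f x = N n m (fst ` f) x))"

end

theory Submission
  imports Defs
begin

definition sh :: "nat \<Rightarrow> (nat \<Rightarrow> nat) \<Rightarrow> nat \<Rightarrow> nat" where
  "sh c h = (\<lambda>i. if i < c then i else h (i - c) + c)"

definition rho :: "nat \<Rightarrow> nat \<Rightarrow> shat \<Rightarrow> shat" where
  "rho n m s = (fst s \<circ> cyc n m, snd s + int (m - n))"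

lemma i2_sh: "i2 m k s = (sh (m - k) (fst s), snd s)"
  by (simp add: i2_def sh_def)

lemma hmult_assoc: "hmult (hmult a b) c = hmult a (hmult b c)"
  by (simp add: hmult_def comp_assoc add.assoc)

lemma hmult_id[simp]: "hmult s (id, 0) = s" "hmult (id, 0) s = s"
  by (simp_all add: hmult_def)

lemma sh_id[simp]: "sh c id = id"
  by (auto simp: sh_def fun_eq_iff)

lemma i2_id[simp]: "i2 m k (id, 0) = (id, 0)"
  by (simp add: i2_sh)

lemma i2_mult: "hmult (i2 M K a) (i2 M K b) = i2 M K (hmult a b)"
  by (auto simp: i2_sh hmult_def sh_def fun_eq_iff)

lemma Shat_id[simp]: "(id, 0) \<in> Shat k"
  by (simp add: Shat_def)

lemma Shat_permutes: "s \<in> Shat k \<Longrightarrow> fst s permutes {..<k}"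
  by (auto simp: Shat_def split: if_splits)

lemma Shat_small: "k \<le> 1 \<Longrightarrow> s \<in> Shat k \<longleftrightarrow> s = (id, 0)"
  by (auto simp: Shat_def)

lemma Shat_big: "\<not> k \<le> 1 \<Longrightarrow> s \<in> Shat k \<longleftrightarrow> fst s permutes {..<k} \<and> (odd (snd s) \<longleftrightarrow> sign (fst s) = -1)"
  by (cases s) (auto simp: Shat_def)

lemma perm_fin: "p permutes {..<(k::nat)} \<Longrightarrow> permutation p"
  using permutes_imp_permutation by blast

lemma sign_pm: "sign p = 1 \<or> sign p = -1"
  by (cases rule: sign_cases[of p]) auto

lemma Shat_mult: "s \<in> Shat k \<Longrightarrow> t \<in> Shat k \<Longrightarrow> hmult s t \<in> Shat k"
proof (cases "k \<le> 1")
  case True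
  then show "s \<in> Shat k \<Longrightarrow> t \<in> Shat k \<Longrightarrow> hmult s t \<in> Shat k" by (simp add: Shat_small)
next
  case False
  assume s: "s \<in> Shat k" and t: "t \<in> Shat k"
  have ps: "fst s permutes {..<k}" and pt: "fst t permutes {..<k}" using s t Shat_permutes by auto
  have sg: "sign (fst s \<circ> fst t) = sign (fst s) * sign (fst t)"
    using ps pt perm_fin sign_compose by blast
  have "odd (snd s) \<longleftrightarrow> sign (fst s) = -1" "odd (snd t) \<longleftrightarrow> sign (fst t) = -1"
    using s t False Shat_big by auto
  moreover have "sign (fst s) = 1 \<or> sign (fst s) = -1" "sign (fst t) = 1 \<or> sign (fst t) = -1"
    using sign_pm by auto
  ultimately show ?thesis using False sg permutes_compose[OF pt ps]
    by (auto simp: Shat_big hmult_def)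
qed

definition hinv :: "shat \<Rightarrow> shat" where "hinv s = (inv (fst s), - snd s)"

lemma Shat_inv: "s \<in> Shat k \<Longrightarrow> hinv s \<in> Shat k"
proof (cases "k \<le> 1")
  case True
  then show "s \<in> Shat k \<Longrightarrow> hinv s \<in> Shat k" by (simp add: Shat_small hinv_def inv_id)
next
  case False
  assume s: "s \<in> Shat k"
  have ps: "fst s permutes {..<k}" using s Shat_permutes by auto
  then show ?thesis using False s permutes_inv[OF ps] sign_inverse[OF perm_fin[OF ps]]
    by (simp add: Shat_big hinv_def)
qed

lemma hinv_r: "s \<in> Shat k \<Longrightarrow> hmult s (hinv s) = (id, 0)"
  using Shat_permutes permutes_inv_o by (fastforce simp: hmult_def hinv_def)

lemma hcoset_mem: "x \<in> hcoset M N s \<longleftrightarrow> (\<exists>h\<in>Shat (M - N). x = hmult s (i2 M (M - N) h))"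
  unfolding hcoset_def by blast

lemma hcoset_mult:
  assumes "h \<in> Shat (M - N)"
  shows "hcoset M N (hmult s (i2 M (M - N) h)) = hcoset M N s"
proof
  show "hcoset M N (hmult s (i2 M (M - N) h)) \<subseteq> hcoset M N s"
  proof
    fix x assume "x \<in> hcoset M N (hmult s (i2 M (M - N) h))"
    then obtain h' where h': "h' \<in> Shat (M - N)" "x = hmult (hmult s (i2 M (M - N) h)) (i2 M (M - N) h')"
      by (auto simp: hcoset_mem)
    then have "x = hmult s (i2 M (M - N) (hmult h h'))" by (simp add: hmult_assoc i2_mult)
    then show "x \<in> hcoset M N s" unfolding hcoset_mem
      by (rule bexI[of _ "hmult h h'"]) (use h' assms Shat_mult in auto)
  qed
next
  show "hcoset M N s \<subseteq> hcoset M N (hmult s (i2 M (M - N) h))"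
  proof
    fix x assume "x \<in> hcoset M N s"
    then obtain h' where h': "h' \<in> Shat (M - N)" "x = hmult s (i2 M (M - N) h')"
      by (auto simp: hcoset_mem)
    have "x = hmult (hmult s (i2 M (M - N) h)) (i2 M (M - N) (hmult (hinv h) h'))"
      using h' assms by (simp add: hmult_assoc i2_mult flip: hmult_assoc[of h] add: hinv_r)
    then show "x \<in> hcoset M N (hmult s (i2 M (M - N) h))" unfolding hcoset_mem
      by (rule bexI[of _ "hmult (hinv h) h'"]) (use h' assms Shat_mult Shat_inv in auto)
  qed
qed

lemma hcoset_self: "s \<in> hcoset M N s"
  unfolding hcoset_mem by (rule bexI[of _ "(id,0)"]) simp_all

lemma hcoset_eq: "t \<in> hcoset M N s \<Longrightarrow> hcoset M N t = hcoset M N s"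
  by (auto simp: hcoset_mem hcoset_mult)


lemma sh_permutes:
  assumes h: "h permutes {..<k}"
  shows "sh c h permutes {..<c + k}"
proof (rule bij_imp_permutes)
  show "sh c h x = x" if "x \<notin> {..<c + k}" for x
    using that permutes_not_in[OF h, of "x - c"] by (auto simp: sh_def)
  have img: "h i < k" if "i < k" for i using permutes_in_image[OF h] that by auto
  have inj: "inj_on (sh c h) {..<c + k}"
  proof (rule inj_onI)
    fix x y assume "x \<in> {..<c+k}" "y \<in> {..<c+k}" "sh c h x = sh c h y"
    then show "x = y"
      using img[of "x - c"] img[of "y - c"] permutes_inj[OF h]
      by (auto simp: sh_def split: if_splits dest: injD)
  qed
  moreover have "sh c h ` {..<c + k} \<subseteq> {..<c + k}"
    using img by (auto simp: sh_def)
  ultimately have "sh c h ` {..<c + k} = {..<c + k}"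
    by (simp add: endo_inj_surj)
  with inj show "bij_betw (sh c h) {..<c + k} {..<c + k}"
    by (simp add: bij_betw_def)
qed

lemma sh_transpose: "sh c (transpose a b \<circ> p) = transpose (a + c) (b + c) \<circ> sh c p"
  by (auto simp: sh_def fun_eq_iff transpose_def)

lemma swapidseq_sh: "swapidseq n p \<Longrightarrow> swapidseq n (sh c p)"
proof (induction rule: swapidseq.induct)
  case id
  then show ?case using sh_id by (simp add: id_def)
next
  case (comp_Suc n p a b)
  have "swapidseq (Suc n) (transpose (a+c) (b+c) \<circ> sh c p)"
    by (rule swapidseq.comp_Suc) (use comp_Suc in auto)
  then show ?case by (simp only: sh_transpose)
qed

lemma sign_sh: "permutation p \<Longrightarrow> sign (sh c p) = sign p"
  unfolding permutation_def sign_def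
  by (metis evenperm_unique swapidseq_sh)

lemma i2_Shat: assumes "h \<in> Shat K" "K \<le> M" shows "i2 M K h \<in> Shat M"
proof (cases "K \<le> 1")
  case True
  then show ?thesis using assms by (simp add: Shat_small)
next
  case False
  then have M: "\<not> M \<le> 1" using assms by auto
  have ph: "fst h permutes {..<K}" using assms Shat_permutes by auto
  have "sh (M - K) (fst h) permutes {..<M}"
    using sh_permutes[OF ph, of "M - K"] assms by simp
  then show ?thesis using assms False M sign_sh[OF perm_fin[OF ph]]
    by (simp add: i2_sh Shat_big)
qed

lemma hcoset_Shat: "s \<in> Shat M \<Longrightarrow> N \<le> M \<Longrightarrow> t \<in> hcoset M N s \<Longrightarrow> t \<in> Shat M"
  by (auto simp: hcoset_mem intro!: Shat_mult i2_Shat)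

lemma Shat_mono: "s \<in> Shat k \<Longrightarrow> k \<le> k' \<Longrightarrow> s \<in> Shat k'"
proof (cases "k \<le> 1")
  case True
  then show "s \<in> Shat k \<Longrightarrow> k \<le> k' \<Longrightarrow> s \<in> Shat k'" by (simp add: Shat_small)
next
  case False
  assume "s \<in> Shat k" "k \<le> k'"
  then show ?thesis using False permutes_subset[of "fst s" "{..<k}" "{..<k'}"]
    by (auto simp: Shat_big)
qed

lemma cyc_nn[simp]: "cyc n n = id"
  by (auto simp: cyc_def fun_eq_iff)

lemma cyc_Suc: "n \<le> m \<Longrightarrow> cyc n (Suc m) = transpose m (Suc m) \<circ> cyc n m"
  by (auto simp: cyc_def fun_eq_iff transpose_def)

lemma cyc_props: "n \<le> m \<Longrightarrow> cyc n m permutes {..<Suc m} \<and> sign (cyc n m) = (-1) ^ (m - n)"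
proof (induction m)
  case 0
  then show ?case using permutes_id[of "{..<Suc 0}"] by (simp add: id_def)
next
  case (Suc m)
  show ?case
  proof (cases "n = Suc m")
    case True
    then show ?thesis using permutes_id[of "{..<Suc (Suc m)}"] by (simp add: id_def)
  next
    case False
    then have nm: "n \<le> m" using Suc by auto
    with Suc.IH have p: "cyc n m permutes {..<Suc m}" and sg: "sign (cyc n m) = (-1) ^ (m - n)" by auto
    have p2: "cyc n m permutes {..<Suc (Suc m)}" using permutes_subset[OF p] by auto
    have t: "transpose m (Suc m) permutes {..<Suc (Suc m)}" by (rule permutes_swap_id) auto
    have "sign (transpose m (Suc m) \<circ> cyc n m) = - sign (cyc n m)"
      using sign_compose[OF perm_fin[OF t] perm_fin[OF p2]] by (simp add: sign_swap_id)
    moreover have "(-1::int) ^ (Suc m - n) = - ((-1) ^ (m - n))"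
      using nm by (simp add: Suc_diff_le)
    ultimately show ?thesis using permutes_compose[OF p2 t] cyc_Suc[OF nm] sg by (simp del: o_apply)
  qed
qed

lemma rho_Shat: assumes "s \<in> Shat m" "n \<le> m" shows "rho n m s \<in> Shat (Suc m)"
proof (cases "m = 0")
  case True
  then show ?thesis using assms by (simp add: Shat_small rho_def)
next
  case False
  have ps: "fst s permutes {..<Suc m}" using Shat_permutes[OF assms(1)] permutes_subset by fastforce
  have pc: "cyc n m permutes {..<Suc m}" and sc: "sign (cyc n m) = (-1) ^ (m - n)"
    using cyc_props[OF assms(2)] by auto
  have sg: "sign (fst s \<circ> cyc n m) = sign (fst s) * (-1) ^ (m - n)"
    using sign_compose[OF perm_fin[OF ps] perm_fin[OF pc]] sc by simp
  have par: "odd (snd s) \<longleftrightarrow> sign (fst s) = -1"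
  proof (cases "m \<le> 1")
    case True then show ?thesis using assms by (simp add: Shat_small)
  next
    case False then show ?thesis using assms by (simp add: Shat_big)
  qed
  have "odd (snd s + int (m - n)) \<longleftrightarrow> sign (fst s) * (-1) ^ (m - n) = -1"
    using par sign_pm[of "fst s"] by (cases "even (m - n)") auto
  then show ?thesis using False permutes_compose[OF pc ps] sg
    by (simp add: rho_def Shat_big)
qed


lemma rho_i2:
  assumes nm: "n \<le> m" and h: "h \<in> Shat (m - n)"
  shows "rho n m (hmult s (i2 m (m - n) h)) = hmult (rho n m s) (i2 (Suc m) (m - n) h)"
proof -
  have ph: "fst h permutes {..<m - n}" using Shat_permutes[OF h] .
  have fix1: "fst h j = j" if "j \<ge> m - n" for j using permutes_not_in[OF ph] that by auto
  have img: "fst h j < m - n" if "j < m - n" for j using permutes_in_image[OF ph] that by auto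
  have "sh n (fst h) (cyc n m i) = cyc n m (sh (Suc n) (fst h) i)" for i
  proof -
    consider "i < n" | "i = n" | "n < i \<and> i \<le> m" | "m < i" by linarith
    then show ?thesis
    proof cases
      case 1 then show ?thesis by (simp add: sh_def cyc_def)
    next
      case 2 then show ?thesis using fix1[of "m - n"] nm by (simp add: sh_def cyc_def)
    next
      case 3
      then have lt: "fst h (i - Suc n) < m - n" using img[of "i - Suc n"] by auto
      have e1: "cyc n m i = i - 1" using 3 by (simp add: cyc_def)
      have "\<not> i - 1 < n" "i - 1 - n = i - Suc n" using 3 by auto
      then have e2: "sh n (fst h) (i - 1) = fst h (i - Suc n) + n" by (simp add: sh_def)
      have e3: "sh (Suc n) (fst h) i = fst h (i - Suc n) + Suc n" using 3 by (simp add: sh_def)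
      have e4: "cyc n m (fst h (i - Suc n) + Suc n) = fst h (i - Suc n) + n" using lt 3 by (simp add: cyc_def)
      show ?thesis using e1 e2 e3 e4 by simp
    next
      case 4
      then show ?thesis using fix1[of "i - n"] fix1[of "i - Suc n"] by (simp add: sh_def cyc_def)
    qed
  qed
  then show ?thesis using nm
    by (simp add: rho_def hmult_def i2_sh fun_eq_iff Suc_diff_le)
qed

lemma rho_coset:
  assumes nm: "n \<le> m" and t: "t \<in> hcoset m n s0"
  shows "hcoset (Suc m) (Suc n) (rho n m t) = hcoset (Suc m) (Suc n) (rho n m s0)"
proof -
  obtain h where h: "h \<in> Shat (m - n)" "t = hmult s0 (i2 m (m - n) h)"
    using t by (auto simp: hcoset_mem)
  then have "rho n m t = hmult (rho n m s0) (i2 (Suc m) (Suc m - Suc n) h)"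
    using rho_i2[OF nm h(1)] by simp
  then show ?thesis using hcoset_mult[of h "Suc m" "Suc n"] h by simp
qed

lemma oplus1_eq:
  assumes nm: "n \<le> m" and s: "s \<in> hcoset m n s0"
  shows "oplus1 n m (hcoset m n s0) = hcoset (Suc m) (Suc n) (rho n m s)"
proof -
  have "(SOME s. s \<in> hcoset m n s0) \<in> hcoset m n s0"
    using hcoset_self by (rule someI)
  then show ?thesis
    unfolding oplus1_def Let_def
    using rho_coset[OF nm] s by (simp add: rho_def[symmetric])
qed

lemma FIhat_elim:
  assumes "f \<in> FIhat n m"
  obtains s0 where "n \<le> m" "s0 \<in> Shat m" "f = hcoset m n s0"
  using assms by (auto simp: FIhat_def split: if_splits)

lemma FIhat_intro: assumes "n \<le> m" "s0 \<in> Shat m" shows "hcoset m n s0 \<in> FIhat n m"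
proof -
  have "hcoset m n s0 \<in> {hcoset m n s | s. s \<in> Shat m}"
    by (rule CollectI, rule exI[of _ s0]) (simp add: assms)
  then show ?thesis using assms by (simp add: FIhat_def)
qed

lemma FIhat_ne: "f \<in> FIhat n m \<Longrightarrow> \<exists>s. s \<in> f"
  by (metis FIhat_elim hcoset_self)

lemma FIhat_le: "f \<in> FIhat n m \<Longrightarrow> n \<le> m"
  by (metis FIhat_elim)

lemma FIhat_mem_Shat: "f \<in> FIhat n m \<Longrightarrow> s \<in> f \<Longrightarrow> s \<in> Shat m"
  by (metis FIhat_elim hcoset_Shat)

lemma oplus1_FIhat:
  assumes "f \<in> FIhat n m" shows "oplus1 n m f \<in> FIhat (Suc n) (Suc m)"
proof -
  obtain s0 where "n \<le> m" "s0 \<in> Shat m" "f = hcoset m n s0" using assms by (rule FIhat_elim)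
  then show ?thesis using oplus1_eq[OF _ hcoset_self] rho_Shat FIhat_intro by simp
qed

lemma oplusk_FIhat: "f \<in> FIhat n m \<Longrightarrow> oplusk k n m f \<in> FIhat (n + k) (m + k)"
  by (induction k) (auto dest: oplus1_FIhat)

lemma perm_commute:
  assumes p: "p permutes {..<(c::nat)}" and q1: "\<And>i. i < c \<Longrightarrow> q i = i" and q2: "\<And>i. i \<ge> c \<Longrightarrow> q i \<ge> c"
  shows "p \<circ> q = q \<circ> p"
proof
  fix i
  have pi: "p i < c \<longleftrightarrow> i < c" using permutes_in_image[OF p] by auto
  show "(p \<circ> q) i = (q \<circ> p) i"
  proof (cases "i < c")
    case True then show ?thesis using q1 pi by simp
  next
    case False
    have "c \<le> q i" using q2[of i] False by linarith
    then have "p (q i) = q i" using permutes_not_in[OF p, of "q i"] by simp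
    then show ?thesis using permutes_not_in[OF p, of i] False by simp
  qed
qed

lemma cyc_comp: "n \<le> m \<Longrightarrow> m \<le> l \<Longrightarrow> cyc m l \<circ> cyc n m = cyc n l"
  by (auto simp: cyc_def fun_eq_iff)

lemma rho_mult:
  assumes nm: "n \<le> m" and ml: "m \<le> l" and s: "fst s permutes {..<m}"
  shows "hmult (rho m l t) (rho n m s) = rho n l (hmult t s)"
proof -
  have c: "fst s \<circ> cyc m l = cyc m l \<circ> fst s"
    by (rule perm_commute[OF s]) (use ml in \<open>auto simp: cyc_def\<close>)
  have "fst t \<circ> cyc m l \<circ> (fst s \<circ> cyc n m) = fst t \<circ> fst s \<circ> (cyc m l \<circ> cyc n m)"
    using c by (metis comp_assoc)
  then show ?thesis using nm ml cyc_comp[OF nm ml]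
    by (simp add: rho_def hmult_def)
qed

lemma sh_sh: "sh a (sh b h) = sh (a + b) h"
  by (auto simp: sh_def fun_eq_iff)


lemma oplus1_comp:
  assumes f: "f \<in> FIhat n m" and g: "g \<in> FIhat m l" and s: "s \<in> f" and t: "t \<in> g"
    and s': "s' \<in> oplus1 n m f" and t': "t' \<in> oplus1 m l g"
  shows "oplus1 n l (hcoset l n (hmult t s)) = hcoset (Suc l) (Suc n) (hmult t' s')"
proof -
  obtain s0 where nm: "n \<le> m" and s0: "s0 \<in> Shat m" and fe: "f = hcoset m n s0"
    using f by (rule FIhat_elim)
  obtain t0 where ml: "m \<le> l" and t0: "t0 \<in> Shat l" and ge: "g = hcoset l m t0"
    using g by (rule FIhat_elim)
  have sS: "s \<in> Shat m" using FIhat_mem_Shat[OF f s] .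
  have ps: "fst s permutes {..<m}" using Shat_permutes[OF sS] .
  have L: "oplus1 n l (hcoset l n (hmult t s)) = hcoset (Suc l) (Suc n) (rho n l (hmult t s))"
    using oplus1_eq[OF _ hcoset_self] nm ml by simp
  have "s' \<in> hcoset (Suc m) (Suc n) (rho n m s)" using s' oplus1_eq[OF nm, of s s0] s fe by simp
  then obtain h1 where h1: "h1 \<in> Shat (m - n)" "s' = hmult (rho n m s) (i2 (Suc m) (m - n) h1)"
    by (auto simp: hcoset_mem)
  have "t' \<in> hcoset (Suc l) (Suc m) (rho m l t)" using t' oplus1_eq[OF ml, of t t0] t ge by simp
  then obtain h2 where h2: "h2 \<in> Shat (l - m)" "t' = hmult (rho m l t) (i2 (Suc l) (l - m) h2)"
    by (auto simp: hcoset_mem)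
  have rS: "rho n m s \<in> Shat (Suc m)" using rho_Shat[OF sS nm] .
  have e2: "i2 (Suc l) (l - m) h2 = (sh (Suc m) (fst h2), snd h2)"
    using ml by (simp add: i2_sh Suc_diff_le)
  have comm: "hmult (i2 (Suc l) (l - m) h2) (rho n m s) = hmult (rho n m s) (i2 (Suc l) (l - m) h2)"
  proof -
    have "fst (rho n m s) \<circ> sh (Suc m) (fst h2) = sh (Suc m) (fst h2) \<circ> fst (rho n m s)"
      by (rule perm_commute[OF Shat_permutes[OF rS]]) (auto simp: sh_def)
    then show ?thesis unfolding e2 by (simp add: hmult_def)
  qed
  have eX: "i2 (Suc l) (l - m) h2 = i2 (Suc l) (l - n) (i2 (l - n) (l - m) h2)"
    using nm ml by (simp add: i2_sh sh_sh Suc_diff_le)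
  have eY: "i2 (Suc m) (m - n) h1 = i2 (Suc l) (l - n) h1"
    using nm ml by (simp add: i2_sh Suc_diff_le)
  have "hmult t' s' = hmult (hmult (rho m l t) (rho n m s))
          (hmult (i2 (Suc l) (l - m) h2) (i2 (Suc m) (m - n) h1))"
    using h1(2) h2(2) comm by (metis hmult_assoc)
  also have "\<dots> = hmult (rho n l (hmult t s)) (i2 (Suc l) (l - n) (hmult (i2 (l - n) (l - m) h2) h1))"
    using rho_mult[OF nm ml ps] eX eY i2_mult by simp
  finally have tm: "hmult t' s' = hmult (rho n l (hmult t s)) (i2 (Suc l) (Suc l - Suc n) (hmult (i2 (l - n) (l - m) h2) h1))"
    by simp
  have hS: "hmult (i2 (l - n) (l - m) h2) h1 \<in> Shat (Suc l - Suc n)"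
    using nm ml h1(1) h2(1) by (auto intro!: Shat_mult i2_Shat elim: Shat_mono)
  show ?thesis unfolding L tm hcoset_mult[OF hS] ..
qed

lemma comp_wd:
  assumes f: "f \<in> FIhat n m" and g: "g \<in> FIhat m l" and s: "s \<in> f" and t: "t \<in> g"
    and s': "s' \<in> f" and t': "t' \<in> g"
  shows "hcoset l n (hmult t s) = hcoset l n (hmult t' s')"
proof -
  obtain s0 where nm: "n \<le> m" and s0: "s0 \<in> Shat m" and fe: "f = hcoset m n s0"
    using f by (rule FIhat_elim)
  obtain t0 where ml: "m \<le> l" and t0: "t0 \<in> Shat l" and ge: "g = hcoset l m t0"
    using g by (rule FIhat_elim)
  have sS: "s \<in> Shat m" using FIhat_mem_Shat[OF f s] .
  have ps: "fst s permutes {..<m}" using Shat_permutes[OF sS] .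
  have "s' \<in> hcoset m n s" using s s' fe hcoset_eq by metis
  then obtain h1 where h1: "h1 \<in> Shat (m - n)" "s' = hmult s (i2 m (m - n) h1)"
    by (auto simp: hcoset_mem)
  have "t' \<in> hcoset l m t" using t t' ge hcoset_eq by metis
  then obtain h2 where h2: "h2 \<in> Shat (l - m)" "t' = hmult t (i2 l (l - m) h2)"
    by (auto simp: hcoset_mem)
  have e2: "i2 l (l - m) h2 = (sh m (fst h2), snd h2)"
    using ml by (simp add: i2_sh)
  have comm: "hmult (i2 l (l - m) h2) s = hmult s (i2 l (l - m) h2)"
  proof -
    have "fst s \<circ> sh m (fst h2) = sh m (fst h2) \<circ> fst s"
      by (rule perm_commute[OF ps]) (auto simp: sh_def)
    then show ?thesis unfolding e2 by (simp add: hmult_def add.commute)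
  qed
  have eX: "i2 l (l - m) h2 = i2 l (l - n) (i2 (l - n) (l - m) h2)"
    using nm ml by (simp add: i2_sh sh_sh)
  have eY: "i2 m (m - n) h1 = i2 l (l - n) h1"
    using nm ml by (simp add: i2_sh)
  have "hmult t' s' = hmult (hmult t s) (hmult (i2 l (l - m) h2) (i2 m (m - n) h1))"
    using h1(2) h2(2) comm by (metis hmult_assoc)
  also have "\<dots> = hmult (hmult t s) (i2 l (l - n) (hmult (i2 (l - n) (l - m) h2) h1))"
    using eX eY i2_mult by simp
  finally have tm: "hmult t' s' = hmult (hmult t s) (i2 l (l - n) (hmult (i2 (l - n) (l - m) h2) h1))" .
  have hS: "hmult (i2 (l - n) (l - m) h2) h1 \<in> Shat (l - n)"
    using nm ml h1(1) h2(1) by (auto intro!: Shat_mult i2_Shat elim: Shat_mono)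
  show ?thesis unfolding tm hcoset_mult[OF hS] ..
qed

lemma oplusk_comp:
  "f \<in> FIhat n m \<Longrightarrow> g \<in> FIhat m l \<Longrightarrow> s \<in> f \<Longrightarrow> t \<in> g \<Longrightarrow>
   s' \<in> oplusk k n m f \<Longrightarrow> t' \<in> oplusk k m l g \<Longrightarrow>
   oplusk k n l (hcoset l n (hmult t s)) = hcoset (l + k) (n + k) (hmult t' s')"
proof (induction k arbitrary: s' t')
  case 0
  then show ?case using comp_wd[of f n m g l s t s' t'] by simp
next
  case (Suc k)
  obtain s'' where s'': "s'' \<in> oplusk k n m f" using FIhat_ne[OF oplusk_FIhat[OF Suc.prems(1)]] by blast
  obtain t'' where t'': "t'' \<in> oplusk k m l g" using FIhat_ne[OF oplusk_FIhat[OF Suc.prems(2)]] by blast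
  have "oplusk (Suc k) n l (hcoset l n (hmult t s)) = oplus1 (n + k) (l + k) (hcoset (l + k) (n + k) (hmult t'' s''))"
    using Suc.IH[OF Suc.prems(1-4) s'' t''] by simp
  also have "\<dots> = hcoset (Suc (l + k)) (Suc (n + k)) (hmult t' s')"
    by (rule oplus1_comp[OF oplusk_FIhat[OF Suc.prems(1)] oplusk_FIhat[OF Suc.prems(2)] s'' t''])
       (use Suc.prems(5,6) in simp_all)
  finally show ?case by simp
qed

lemma oplusk_id: "oplusk k n n (hcoset n n (id, 0)) = hcoset (n + k) (n + k) (id, 0)"
proof (induction k)
  case 0 then show ?case by simp
next
  case (Suc k)
  have r: "rho (n + k) (n + k) (id, 0) = (id, 0)" by (simp only: rho_def cyc_nn) simp
  have "oplusk (Suc k) n n (hcoset n n (id, 0)) = oplus1 (n + k) (n + k) (oplusk k n n (hcoset n n (id, 0)))"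
    by (simp only: oplusk.simps)
  also have "\<dots> = oplus1 (n + k) (n + k) (hcoset (n + k) (n + k) (id, 0))"
    by (simp only: Suc.IH)
  also have "\<dots> = hcoset (Suc (n + k)) (Suc (n + k)) (rho (n + k) (n + k) (id, 0))"
    by (rule oplus1_eq[OF le_refl hcoset_self])
  finally show ?case by (simp only: r add_Suc_right)
qed


context
  fixes V :: "nat \<Rightarrow> 'v::ab_group_add set" and F :: "nat \<Rightarrow> nat \<Rightarrow> shat set \<Rightarrow> 'v \<Rightarrow> 'v"
  assumes M: "FIhat_module V F"
begin

lemma mod_0: "0 \<in> V n" using M by (simp add: FIhat_module_def)
lemma mod_plus: "x \<in> V n \<Longrightarrow> y \<in> V n \<Longrightarrow> x + y \<in> V n" using M by (simp add: FIhat_module_def)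
lemma mod_uminus: "x \<in> V n \<Longrightarrow> - x \<in> V n" using M by (simp add: FIhat_module_def)
lemma mod_cl: "f \<in> FIhat n m \<Longrightarrow> x \<in> V n \<Longrightarrow> F n m f x \<in> V m"
  using M by (simp add: FIhat_module_def)
lemma mod_add: "f \<in> FIhat n m \<Longrightarrow> x \<in> V n \<Longrightarrow> y \<in> V n \<Longrightarrow> F n m f (x + y) = F n m f x + F n m f y"
  using M by (simp add: FIhat_module_def)
lemma mod_id: "x \<in> V n \<Longrightarrow> F n n (hcoset n n (id, 0)) x = x"
  using M by (simp add: FIhat_module_def)
lemma mod_comp: "f \<in> FIhat n m \<Longrightarrow> g \<in> FIhat m l \<Longrightarrow> s \<in> f \<Longrightarrow> t \<in> g \<Longrightarrow> x \<in> V n \<Longrightarrow>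
    F n l (hcoset l n (hmult t s)) x = F m l g (F n m f x)"
  using M unfolding FIhat_module_def by blast

lemma mod_zero: "f \<in> FIhat n m \<Longrightarrow> F n m f 0 = 0"
  using mod_add[of f n m 0 0] mod_0[of n] by simp

lemma mod_neg: "f \<in> FIhat n m \<Longrightarrow> x \<in> V n \<Longrightarrow> F n m f (- x) = - F n m f x"
  using mod_add[of f n m x "- x"] mod_uminus[of x n] mod_zero[of f n m]
  by (simp add: eq_neg_iff_add_eq_0 add.commute)

lemma sigma_module: "FIhat_module (SigmaV k V) (SigmaF k F)"
  unfolding FIhat_module_def SigmaV_def SigmaF_def
proof (intro conjI allI impI ballI)
  fix n show "0 \<in> V (n + k)" by (rule mod_0)
next
  fix n x y assume "x \<in> V (n + k)" "y \<in> V (n + k)" then show "x + y \<in> V (n + k)" by (rule mod_plus)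
next
  fix n x assume "x \<in> V (n + k)" then show "- x \<in> V (n + k)" by (rule mod_uminus)
next
  fix n m f x assume "f \<in> FIhat n m" "x \<in> V (n + k)"
  then show "F (n + k) (m + k) (oplusk k n m f) x \<in> V (m + k)" by (intro mod_cl oplusk_FIhat)
next
  fix n m f x y assume "f \<in> FIhat n m" "x \<in> V (n + k)" "y \<in> V (n + k)"
  then show "F (n + k) (m + k) (oplusk k n m f) (x + y) =
       F (n + k) (m + k) (oplusk k n m f) x + F (n + k) (m + k) (oplusk k n m f) y"
    by (intro mod_add oplusk_FIhat)
next
  fix n x assume "x \<in> V (n + k)"
  then show "F (n + k) (n + k) (oplusk k n n (hcoset n n (id, 0))) x = x"
    by (simp add: oplusk_id mod_id)
next
  fix n m l f g s t x
  assume f: "f \<in> FIhat n m" and g: "g \<in> FIhat m l" and s: "s \<in> f" and t: "t \<in> g" and x: "x \<in> V (n + k)"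
  obtain s' where s': "s' \<in> oplusk k n m f" using FIhat_ne[OF oplusk_FIhat[OF f]] by blast
  obtain t' where t': "t' \<in> oplusk k m l g" using FIhat_ne[OF oplusk_FIhat[OF g]] by blast
  show "F (n + k) (l + k) (oplusk k n l (hcoset l n (hmult t s))) x =
       F (m + k) (l + k) (oplusk k m l g) (F (n + k) (m + k) (oplusk k n m f) x)"
    unfolding oplusk_comp[OF f g s t s' t']
    by (rule mod_comp[OF oplusk_FIhat[OF f] oplusk_FIhat[OF g] s' t' x])
qed

lemma z_Shat: "2 \<le> p \<Longrightarrow> (id, 2 * j) \<in> Shat p"
  by (simp add: Shat_big)

lemma z_trivial:
  assumes G: "gen_degree_le V F a" and p: "a + 2 \<le> p" and x: "x \<in> V p"
  shows "F p p (hcoset p p (id, 2 * j)) x = x"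
proof -
  define z where "z = hcoset p p (id, 2 * j)"
  have zF: "z \<in> FIhat p p" unfolding z_def using p by (intro FIhat_intro z_Shat) auto
  define H where "H = {y \<in> V p. F p p z y = y}"
  have gens: "{F n p f x | n f x. n \<le> a \<and> f \<in> FIhat n p \<and> x \<in> V n} \<subseteq> H"
  proof
    fix y assume "y \<in> {F n p f x | n f x. n \<le> a \<and> f \<in> FIhat n p \<and> x \<in> V n}"
    then obtain q g x' where y: "y = F q p g x'" and q: "q \<le> a" and g: "g \<in> FIhat q p" and x': "x' \<in> V q"
      by blast
    obtain u where "q \<le> p" and u: "u \<in> Shat p" and ge: "g = hcoset p q u" using g by (rule FIhat_elim)
    have zz: "(id, 2 * j) \<in> Shat (p - q)" using p q by (intro z_Shat) auto
    have e: "hmult (id, 2 * j) u = hmult u (i2 p (p - q) (id, 2 * j))"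
      by (simp add: hmult_def i2_sh)
    have "F p p z y = F q p (hcoset p q (hmult (id, 2 * j) u)) x'"
      unfolding y by (rule mod_comp[OF g zF _ _ x', symmetric]) (auto simp: ge z_def intro: hcoset_self)
    also have "\<dots> = y" unfolding e hcoset_mult[OF zz] y ge ..
    finally show "y \<in> H" unfolding H_def using y mod_cl[OF g x'] by simp
  qed
  have "zspan {F n p f x | n f x. n \<le> a \<and> f \<in> FIhat n p \<and> x \<in> V n} \<subseteq> H"
    unfolding zspan_def
  proof (rule Inter_lower, intro CollectI conjI ballI gens)
    show "0 \<in> H" unfolding H_def using mod_0 mod_zero[OF zF] by simp
  next
    fix x y assume "x \<in> H" "y \<in> H" then show "x + y \<in> H"
      unfolding H_def using mod_plus mod_add[OF zF] by simp
  next
    fix x assume "x \<in> H" then show "- x \<in> H"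
      unfolding H_def using mod_uminus mod_neg[OF zF] by simp
  qed
  then show ?thesis using G x unfolding gen_degree_le_def H_def z_def by blast
qed

end

fun Rk :: "nat \<Rightarrow> nat \<Rightarrow> nat \<Rightarrow> shat \<Rightarrow> shat" where
  "Rk 0 n m s = s"
| "Rk (Suc k) n m s = rho (n + k) (m + k) (Rk k n m s)"

lemma oplusk_R: "n \<le> m \<Longrightarrow> oplusk k n m (hcoset m n s) = hcoset (m + k) (n + k) (Rk k n m s)"
  by (induction k) (auto simp: oplus1_eq[OF _ hcoset_self])

lemma Rk_Shat: "s \<in> Shat m \<Longrightarrow> n \<le> m \<Longrightarrow> Rk k n m s \<in> Shat (m + k)"
  by (induction k) (auto intro: rho_Shat)

lemma Rk_z: "Rk k n m (hmult s (id, c)) = hmult (Rk k n m s) (id, c)"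
  by (induction k) (auto simp: rho_def hmult_def)


lemma key:
  fixes V :: "nat \<Rightarrow> 'v::ab_group_add set" and F :: "nat \<Rightarrow> nat \<Rightarrow> shat set \<Rightarrow> 'v \<Rightarrow> 'v"
  assumes M: "FIhat_module V F" and G: "gen_degree_le V F a"
    and f: "f \<in> FIhat n m" and f': "f' \<in> FIhat n m" and fe: "fst ` f = fst ` f'"
    and x: "x \<in> V (n + (a + 2))"
  shows "F (n + (a + 2)) (m + (a + 2)) (oplusk (a + 2) n m f') x = F (n + (a + 2)) (m + (a + 2)) (oplusk (a + 2) n m f) x"
proof -
  define k where "k = a + 2"
  obtain s0 where nm: "n \<le> m" and s0: "s0 \<in> Shat m" and fd: "f = hcoset m n s0" using f by (rule FIhat_elim)
  obtain s0' where s0': "s0' \<in> Shat m" and fd': "f' = hcoset m n s0'" using f' by (rule FIhat_elim)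
  have "fst s0' \<in> fst ` f" using fe fd' hcoset_self by auto
  then obtain s1 where s1f: "s1 \<in> f" and fs1: "fst s1 = fst s0'" by auto
  have s1: "s1 \<in> Shat m" using FIhat_mem_Shat[OF f s1f] .
  have f1: "f = hcoset m n s1" using hcoset_eq s1f fd by metis
  have ev: "even (snd s0' - snd s1)"
  proof (cases "m \<le> 1")
    case True then show ?thesis using s1 s0' by (simp add: Shat_small)
  next
    case False
    then have "odd (snd s1) \<longleftrightarrow> odd (snd s0')" using s1 s0' fs1 by (simp add: Shat_big)
    then show ?thesis by simp
  qed
  from ev obtain j where j: "snd s0' - snd s1 = 2 * j" by (rule evenE)
  have se: "s0' = hmult s1 (id, 2 * j)" using fs1 j by (cases s0', cases s1) (simp add: hmult_def)
  have o': "oplusk k n m f' = hcoset (m + k) (n + k) (hmult (Rk k n m s1) (id, 2 * j))"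
    unfolding fd' se oplusk_R[OF nm] Rk_z ..
  have o: "oplusk k n m f = hcoset (m + k) (n + k) (Rk k n m s1)"
    unfolding f1 oplusk_R[OF nm] ..
  have f0: "hcoset (n + k) (n + k) (id, 2 * j) \<in> FIhat (n + k) (n + k)"
    unfolding k_def by (intro FIhat_intro) (auto simp: Shat_big)
  have g0: "hcoset (m + k) (n + k) (Rk k n m s1) \<in> FIhat (n + k) (m + k)"
    using nm by (intro FIhat_intro Rk_Shat s1) auto
  have "F (n + k) (m + k) (oplusk k n m f') x =
        F (n + k) (m + k) (hcoset (m + k) (n + k) (Rk k n m s1)) (F (n + k) (n + k) (hcoset (n + k) (n + k) (id, 2 * j)) x)"
    unfolding o' by (rule mod_comp[OF M f0 g0 hcoset_self hcoset_self]) (use x k_def in simp)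
  also have "F (n + k) (n + k) (hcoset (n + k) (n + k) (id, 2 * j)) x = x"
    by (rule z_trivial[OF M G]) (use x k_def in simp_all)
  finally have "F (n + k) (m + k) (oplusk k n m f') x = F (n + k) (m + k) (oplusk k n m f) x"
    unfolding o .
  then show ?thesis unfolding k_def .
qed

theorem mainTheorem10:
  fixes V :: "nat \<Rightarrow> 'v::ab_group_add set"
    and F :: "nat \<Rightarrow> nat \<Rightarrow> shat set \<Rightarrow> 'v \<Rightarrow> 'v"
    and a :: nat
  assumes "FIhat_module V F"
    and "gen_degree_le V F a"
  shows "is_FI_module (SigmaV (a + 2) V) (SigmaF (a + 2) F)"
  unfolding is_FI_module_def
proof (intro conjI)
  show "FIhat_module (SigmaV (a + 2) V) (SigmaF (a + 2) F)"
    by (rule sigma_module[OF assms(1)])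
  define N where "N = (\<lambda>n m P. SigmaF (a + 2) F n m (SOME f. f \<in> FIhat n m \<and> fst ` f = P))"
  show "\<exists>N. \<forall>n m f. f \<in> FIhat n m \<longrightarrow> (\<forall>x\<in>SigmaV (a + 2) V n. SigmaF (a + 2) F n m f x = N n m (fst ` f) x)"
  proof (intro exI[of _ N] allI impI ballI)
    fix n m f x assume f: "f \<in> FIhat n m" and x: "x \<in> SigmaV (a + 2) V n"
    define f' where "f' = (SOME f'. f' \<in> FIhat n m \<and> fst ` f' = fst ` f)"
    have "f' \<in> FIhat n m \<and> fst ` f' = fst ` f" unfolding f'_def by (rule someI[of _ f]) (simp add: f)
    then show "SigmaF (a + 2) F n m f x = N n m (fst ` f) x"
      unfolding N_def f'_def[symmetric] SigmaF_def
      using key[OF assms f] x by (simp add: SigmaV_def)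
  qed
qed

end
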